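(* Let $B$ be a board with set of sinks $S$ and let $k\ge 1$. If the extended full tilt graph $\hat G_F(B^{(k)})$ of the $k$-scaled board (with sinks the sub-pixels of sinks of $S$) contains an arborescence of weight $w$ converging to its root, then the extended full tilt graph $\hat G_F(B)$ (with sinks $S$) contains an arborescence of weight at most $w$ converging to its root.
   Context: Pixels are unit squares indexed by $\mathbb{Z}^2$. A board $B=(V,E)$ is a finite subgraph of the square grid graph on $\mathbb{Z}^2$. For a pixel $p$, its row (column) segment is the maximal set of pixels reachable from $p$ using only horizontal (vertical) edges; $p^\ell,p^r$ are the leftmost/rightmost pixels of its row segment and $p^u,p^d$ the topmost/bottommost pixels of its column segment. The full tilt graph of a board has its pixels as vertices and edges $(p,p^x)$ for $x\in\{\ell,r,u,d\}$, $p^x\ne p$. The $k$-scaled board $B^{(k)}$ replaces each pixel $(i,j)\in V$ by the $k\times k$ sub-pixels $(ki+a,kj+b)$, $0\le a,b<k$, with adjacent sub-pixels of the same pixel joined by edges and adjacent sub-pixels of different pixels $p,p'$ joined iff $\{p,p'\}\in E$; its sinks are all sub-pixels of sinks of $B$. Extended graph: for a directed graph $G$ with sinks $S$, $\hat G$ has vertex set $V(G)\cup\{r\}$ with new root $r$ and edges: every edge of $G$ with weight $0$; for every edge $(p,q)$ of $G$ with $(q,p)$ not an edge of $G$, the inverse edge $(q,p)$ with weight $1$; and $(s,r)$ with weight $0$ for $s\in S$. An arborescence converging to $r$ is a spanning subgraph in which every vertex other than $r$ has exactly one outgoing edge and a directed path to $r$; its weight is the sum of its edge weights. *)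

theory Defs
  imports Main
begin

type_synonym pixel = "int \<times> int"

text \<open>Pixel (i,j): the first coordinate is the horizontal one, the second the vertical one.\<close>

definition grid_adj :: "pixel \<Rightarrow> pixel \<Rightarrow> bool" where
  "grid_adj p q \<longleftrightarrow> \<bar>fst p - fst q\<bar> + \<bar>snd p - snd q\<bar> = 1"

definition board :: "pixel set \<Rightarrow> pixel set set \<Rightarrow> bool" where
  "board V E \<longleftrightarrow> finite V \<and>
     (\<forall>e\<in>E. \<exists>p q. e = {p, q} \<and> p \<in> V \<and> q \<in> V \<and> grid_adj p q)"

definition hrel :: "pixel set set \<Rightarrow> (pixel \<times> pixel) set" where
  "hrel E = {(p, q). {p, q} \<in> E \<and> p \<noteq> q \<and> snd p = snd q}"

definition vrel :: "pixel set set \<Rightarrow> (pixel \<times> pixel) set" where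
  "vrel E = {(p, q). {p, q} \<in> E \<and> p \<noteq> q \<and> fst p = fst q}"

definition row_seg :: "pixel set set \<Rightarrow> pixel \<Rightarrow> pixel set" where
  "row_seg E p = {q. (p, q) \<in> (hrel E)\<^sup>*}"

definition col_seg :: "pixel set set \<Rightarrow> pixel \<Rightarrow> pixel set" where
  "col_seg E p = {q. (p, q) \<in> (vrel E)\<^sup>*}"

definition left_end :: "pixel set set \<Rightarrow> pixel \<Rightarrow> pixel" where
  "left_end E p = (THE q. q \<in> row_seg E p \<and> (\<forall>q'\<in>row_seg E p. fst q \<le> fst q'))"

definition right_end :: "pixel set set \<Rightarrow> pixel \<Rightarrow> pixel" where
  "right_end E p = (THE q. q \<in> row_seg E p \<and> (\<forall>q'\<in>row_seg E p. fst q' \<le> fst q))"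

definition up_end :: "pixel set set \<Rightarrow> pixel \<Rightarrow> pixel" where
  "up_end E p = (THE q. q \<in> col_seg E p \<and> (\<forall>q'\<in>col_seg E p. snd q \<le> snd q'))"

definition down_end :: "pixel set set \<Rightarrow> pixel \<Rightarrow> pixel" where
  "down_end E p = (THE q. q \<in> col_seg E p \<and> (\<forall>q'\<in>col_seg E p. snd q' \<le> snd q))"

definition full_tilt_edges :: "pixel set \<Rightarrow> pixel set set \<Rightarrow> (pixel \<times> pixel) set" where
  "full_tilt_edges V E = {(p, q). p \<in> V \<and>
      q \<in> {left_end E p, right_end E p, up_end E p, down_end E p} \<and> q \<noteq> p}"

definition parent_px :: "int \<Rightarrow> pixel \<Rightarrow> pixel" where
  "parent_px k q = (fst q div k, snd q div k)"

definition subpixels :: "int \<Rightarrow> pixel set \<Rightarrow> pixel set" where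
  "subpixels k A = {(k * i + a, k * j + b) | i j a b. (i, j) \<in> A \<and> 0 \<le> a \<and> a < k \<and> 0 \<le> b \<and> b < k}"

definition scaled_V :: "int \<Rightarrow> pixel set \<Rightarrow> pixel set" where
  "scaled_V k V = subpixels k V"

definition scaled_E :: "int \<Rightarrow> pixel set \<Rightarrow> pixel set set \<Rightarrow> pixel set set" where
  "scaled_E k V E = {{q, q'} | q q'. q \<in> subpixels k V \<and> q' \<in> subpixels k V \<and> grid_adj q q' \<and>
      (parent_px k q = parent_px k q' \<or> {parent_px k q, parent_px k q'} \<in> E)}"

text \<open>Extended graph: vertices Some p for p in V, root None.\<close>
definition ext_vertices :: "'a set \<Rightarrow> 'a option set" where
  "ext_vertices V = Some ` V \<union> {None}"

definition ext_edges :: "('a \<times> 'a) set \<Rightarrow> 'a set \<Rightarrow> ('a option \<times> 'a option) set" where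
  "ext_edges G S = {(Some p, Some q) | p q. (p, q) \<in> G}
     \<union> {(Some q, Some p) | p q. (p, q) \<in> G \<and> (q, p) \<notin> G}
     \<union> {(Some s, None) | s. s \<in> S}"

definition ext_weight :: "('a \<times> 'a) set \<Rightarrow> ('a option \<times> 'a option) \<Rightarrow> nat" where
  "ext_weight G e = (case e of
       (Some p, Some q) \<Rightarrow> (if (p, q) \<in> G then 0 else 1)
     | _ \<Rightarrow> 0)"

definition arborescence_to ::
  "'v set \<Rightarrow> ('v \<times> 'v) set \<Rightarrow> 'v \<Rightarrow> ('v \<times> 'v) set \<Rightarrow> bool" where
  "arborescence_to Vs Es r A \<longleftrightarrow> A \<subseteq> Es \<and>
     (\<forall>v\<in>Vs - {r}. \<exists>!w. (v, w) \<in> A) \<and>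
     (\<forall>v\<in>Vs. (v, r) \<in> A\<^sup>*)"

definition arb_weight :: "('a \<times> 'a) set \<Rightarrow> ('a option \<times> 'a option) set \<Rightarrow> nat" where
  "arb_weight G A = (\<Sum>e\<in>A. ext_weight G e)"

end

theory Submission
  imports Defs
begin

lemma sub_iff:
  assumes "0 < k"
  shows "x \<in> subpixels k A \<longleftrightarrow> parent_px k x \<in> A"
proof
  assume "x \<in> subpixels k A"
  then obtain i j a b where x: "x = (k*i+a, k*j+b)" "(i,j) \<in> A" "0 \<le> a" "a < k" "0 \<le> b" "b < k"
    unfolding subpixels_def by blast
  have "(k*i+a) div k = i" using x assms by simp
  moreover have "(k*j+b) div k = j" using x assms by simp
  ultimately show "parent_px k x \<in> A" using x by (simp add: parent_px_def)
next
  assume h: "parent_px k x \<in> A"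
  have "x = (k*(fst x div k) + fst x mod k, k*(snd x div k) + snd x mod k)" by simp
  moreover have "0 \<le> fst x mod k" "fst x mod k < k" "0 \<le> snd x mod k" "snd x mod k < k"
    using assms by auto
  ultimately show "x \<in> subpixels k A" using h unfolding subpixels_def parent_px_def
    by blast
qed

lemma finite_sub:
  assumes "finite A"
  shows "finite (subpixels k A)"
proof -
  have "subpixels k A = (\<lambda>((i,j),(a,b)). (k*i+a, k*j+b)) ` (A \<times> ({0..<k} \<times> {0..<k}))"
    unfolding subpixels_def by (auto simp: image_iff) force+
  then show ?thesis using assms by simp
qed

lemma hrel_sym: "sym (hrel E)"
  unfolding sym_def hrel_def by (auto simp: insert_commute)

lemma vrel_sym: "sym (vrel E)"
  unfolding sym_def vrel_def by (auto simp: insert_commute)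

lemma row_snd: "q \<in> row_seg E p \<Longrightarrow> snd q = snd p"
  unfolding row_seg_def mem_Collect_eq
  by (induction rule: rtrancl_induct) (auto simp: hrel_def)

lemma col_fst: "q \<in> col_seg E p \<Longrightarrow> fst q = fst p"
  unfolding col_seg_def mem_Collect_eq
  by (induction rule: rtrancl_induct) (auto simp: vrel_def)

lemma row_sub: "q \<in> row_seg E p \<Longrightarrow> \<forall>e\<in>E. e \<subseteq> W \<Longrightarrow> q \<in> insert p W"
  unfolding row_seg_def mem_Collect_eq
  by (induction rule: rtrancl_induct) (auto simp: hrel_def)

lemma col_sub: "q \<in> col_seg E p \<Longrightarrow> \<forall>e\<in>E. e \<subseteq> W \<Longrightarrow> q \<in> insert p W"
  unfolding col_seg_def mem_Collect_eq
  by (induction rule: rtrancl_induct) (auto simp: vrel_def)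

lemma scaledE_sub: "\<forall>e\<in>scaled_E k V E. e \<subseteq> subpixels k V"
  unfolding scaled_E_def by auto

lemma scaledE_mem:
  assumes "{x, y} \<in> scaled_E k V E"
  shows "x \<in> subpixels k V \<and> y \<in> subpixels k V \<and> grid_adj x y \<and>
     (parent_px k x = parent_px k y \<or> {parent_px k x, parent_px k y} \<in> E)"
proof -
  obtain q q' where e: "{x,y} = {q,q'}" "q \<in> subpixels k V" "q' \<in> subpixels k V" "grid_adj q q'"
    "parent_px k q = parent_px k q' \<or> {parent_px k q, parent_px k q'} \<in> E"
    using assms unfolding scaled_E_def by blast
  have ga: "grid_adj q q' = grid_adj q' q" unfolding grid_adj_def by (simp add: abs_minus_commute)
  from e(1) have "(x = q \<and> y = q') \<or> (x = q' \<and> y = q)" by (auto simp: doubleton_eq_iff)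
  then show ?thesis using e ga by (auto simp: insert_commute)
qed

lemma row_proj1:
  assumes "x \<in> row_seg (scaled_E k V E) q"
  shows "parent_px k x \<in> row_seg E (parent_px k q)"
  using assms unfolding row_seg_def mem_Collect_eq
proof (induction rule: rtrancl_induct)
  case base then show ?case by simp
next
  case (step y z)
  from step(2) have e: "{y,z} \<in> scaled_E k V E" "snd y = snd z" unfolding hrel_def by auto
  from scaledE_mem[OF e(1)] have h: "parent_px k y = parent_px k z \<or> {parent_px k y, parent_px k z} \<in> E" by blast
  show ?case
  proof (cases "parent_px k y = parent_px k z")
    case True then show ?thesis using step by simp
  next
    case False
    then have "(parent_px k y, parent_px k z) \<in> hrel E" using h e(2)
      unfolding hrel_def by (auto simp: parent_px_def)
    then show ?thesis using step(3) by (meson rtrancl.rtrancl_into_rtrancl)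
  qed
qed

lemma col_proj1:
  assumes "x \<in> col_seg (scaled_E k V E) q"
  shows "parent_px k x \<in> col_seg E (parent_px k q)"
  using assms unfolding col_seg_def mem_Collect_eq
proof (induction rule: rtrancl_induct)
  case base then show ?case by simp
next
  case (step y z)
  from step(2) have e: "{y,z} \<in> scaled_E k V E" "fst y = fst z" unfolding vrel_def by auto
  from scaledE_mem[OF e(1)] have h: "parent_px k y = parent_px k z \<or> {parent_px k y, parent_px k z} \<in> E" by blast
  show ?case
  proof (cases "parent_px k y = parent_px k z")
    case True then show ?thesis using step by simp
  next
    case False
    then have "(parent_px k y, parent_px k z) \<in> vrel E" using h e(2)
      unfolding vrel_def by (auto simp: parent_px_def)
    then show ?thesis using step(3) by (meson rtrancl.rtrancl_into_rtrancl)
  qed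
qed


lemma scaledE_intro:
  "x \<in> subpixels k V \<Longrightarrow> y \<in> subpixels k V \<Longrightarrow> grid_adj x y \<Longrightarrow>
   (parent_px k x = parent_px k y \<or> {parent_px k x, parent_px k y} \<in> E) \<Longrightarrow>
   {x, y} \<in> scaled_E k V E"
  unfolding scaled_E_def by blast

lemma div_lemma1: "0 < (k::int) \<Longrightarrow> (k*i + (k - 1)) div k = i"
  by simp

lemma div_lemma2: "0 < (k::int) \<Longrightarrow> (k*i - 1) div k = i - 1"
proof -
  assume "0 < k"
  have "k*i - 1 = k*(i-1) + (k-1)" by (simp add: algebra_simps)
  then have "(k*i - 1) div k = (k*(i-1) + (k-1)) div k" by (simp only:)
  then show ?thesis using div_lemma1[OF \<open>0 < k\<close>, of "i-1"] by simp
qed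

lemma block_h:
  assumes k: "0<k" and V: "(i, y div k) \<in> V" and u: "u1 div k = i" "u2 div k = i"
  shows "((u1,y),(u2,y)) \<in> (hrel (scaled_E k V E))\<^sup>*"
proof -
  have main: "((a,y),(b,y)) \<in> (hrel (scaled_E k V E))\<^sup>*"
    if ab: "a \<le> b" "a div k = i" "b div k = i" for a b
  proof -
    have "u \<le> b \<longrightarrow> ((a,y),(u,y)) \<in> (hrel (scaled_E k V E))\<^sup>*" if "a \<le> u" for u
      using that
    proof (induction u rule: int_ge_induct)
      case base then show ?case by simp
    next
      case (step u)
      show ?case
      proof
        assume ub: "u + 1 \<le> b"
        have IH: "((a,y),(u,y)) \<in> (hrel (scaled_E k V E))\<^sup>*" using step ub by simp
        have d1: "u div k = i"
          using zdiv_mono1[OF step(1) k] zdiv_mono1[of u b k] ub k ab by linarith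
        have d2: "(u+1) div k = i"
          using zdiv_mono1[of a "u+1" k] zdiv_mono1[of "u+1" b k] ub k ab step(1) by linarith
        have "{(u,y),(u+1,y)} \<in> scaled_E k V E"
          apply (rule scaledE_intro)
          using d1 d2 V k by (auto simp: sub_iff parent_px_def grid_adj_def)
        then have "((u,y),(u+1,y)) \<in> hrel (scaled_E k V E)" unfolding hrel_def by auto
        then show "((a,y),(u+1,y)) \<in> (hrel (scaled_E k V E))\<^sup>*" using IH by simp
      qed
    qed
    then show ?thesis using ab by simp
  qed
  show ?thesis
  proof (cases "u1 \<le> u2")
    case True then show ?thesis using main u by simp
  next
    case False
    then have "((u2,y),(u1,y)) \<in> (hrel (scaled_E k V E))\<^sup>*" using main u by simp
    then show ?thesis using sym_rtrancl[OF hrel_sym] unfolding sym_def by blast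
  qed
qed

lemma block_v:
  assumes k: "0<k" and V: "(y div k, i) \<in> V" and u: "u1 div k = i" "u2 div k = i"
  shows "((y,u1),(y,u2)) \<in> (vrel (scaled_E k V E))\<^sup>*"
proof -
  have main: "((y,a),(y,b)) \<in> (vrel (scaled_E k V E))\<^sup>*"
    if ab: "a \<le> b" "a div k = i" "b div k = i" for a b
  proof -
    have "u \<le> b \<longrightarrow> ((y,a),(y,u)) \<in> (vrel (scaled_E k V E))\<^sup>*" if "a \<le> u" for u
      using that
    proof (induction u rule: int_ge_induct)
      case base then show ?case by simp
    next
      case (step u)
      show ?case
      proof
        assume ub: "u + 1 \<le> b"
        have IH: "((y,a),(y,u)) \<in> (vrel (scaled_E k V E))\<^sup>*" using step ub by simp
        have d1: "u div k = i"
          using zdiv_mono1[OF step(1) k] zdiv_mono1[of u b k] ub k ab by linarith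
        have d2: "(u+1) div k = i"
          using zdiv_mono1[of a "u+1" k] zdiv_mono1[of "u+1" b k] ub k ab step(1) by linarith
        have "{(y,u),(y,u+1)} \<in> scaled_E k V E"
          apply (rule scaledE_intro)
          using d1 d2 V k by (auto simp: sub_iff parent_px_def grid_adj_def)
        then have "((y,u),(y,u+1)) \<in> vrel (scaled_E k V E)" unfolding vrel_def by auto
        then show "((y,a),(y,u+1)) \<in> (vrel (scaled_E k V E))\<^sup>*" using IH by simp
      qed
    qed
    then show ?thesis using ab by simp
  qed
  show ?thesis
  proof (cases "u1 \<le> u2")
    case True then show ?thesis using main u by simp
  next
    case False
    then have "((y,u2),(y,u1)) \<in> (vrel (scaled_E k V E))\<^sup>*" using main u by simp
    then show ?thesis using sym_rtrancl[OF vrel_sym] unfolding sym_def by blast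
  qed
qed


lemma board_edge:
  assumes "board V E" "{r, r'} \<in> E"
  shows "r \<in> V \<and> r' \<in> V \<and> grid_adj r r'"
proof -
  obtain p q where e: "{r,r'} = {p,q}" "p \<in> V" "q \<in> V" "grid_adj p q"
    using assms unfolding board_def by blast
  have ga: "grid_adj q p" using e(4) unfolding grid_adj_def by (simp add: abs_minus_commute)
  from e(1) have "(r = p \<and> r' = q) \<or> (r = q \<and> r' = p)" by (auto simp: doubleton_eq_iff)
  then show ?thesis using e ga by auto
qed

lemma row_proj2:
  assumes k: "0<k" and B: "board V E" and r: "r \<in> row_seg E (parent_px k q)"
  shows "\<exists>x \<in> row_seg (scaled_E k V E) q. parent_px k x = r"
  using r unfolding row_seg_def mem_Collect_eq
proof (induction rule: rtrancl_induct)
  case base show ?case by (rule bexI[of _ q]) (auto simp: row_seg_def)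
next
  case (step r r')
  then obtain x where x: "(q, x) \<in> (hrel (scaled_E k V E))\<^sup>*" "parent_px k x = r"
    unfolding row_seg_def by auto
  from step(2) have e: "{r,r'} \<in> E" "snd r = snd r'" "r \<noteq> r'" unfolding hrel_def by auto
  from board_edge[OF B e(1)] have rv: "r \<in> V" "r' \<in> V" "grid_adj r r'" by auto
  then have "fst r' = fst r + 1 \<or> fst r' = fst r - 1" using e(2) unfolding grid_adj_def by auto
  define i where "i = fst r"
  define y where "y = snd x"
  have xi: "fst x div k = i" "y div k = snd r" using x(2) unfolding i_def y_def parent_px_def by auto
  have xeq: "x = (fst x, y)" unfolding y_def by simp
  have Vi: "(i, y div k) \<in> V" using rv xi unfolding i_def by simp
  show ?case
  proof (cases "fst r' = fst r + 1")
    case True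
    define x1 where "x1 = (k*i + (k-1), y)"
    define x2 where "x2 = (k*(i+1), y)"
    have p1: "parent_px k x1 = r" unfolding x1_def parent_px_def using div_lemma1[OF k] xi i_def by simp
    have p2: "parent_px k x2 = r'" unfolding x2_def parent_px_def using k xi i_def True e(2)
      by (simp add: prod_eq_iff)
    have "(x, x1) \<in> (hrel (scaled_E k V E))\<^sup>*"
      using block_h[OF k Vi xi(1), of "k*i + (k-1)"] xeq div_lemma1[OF k] unfolding x1_def by metis
    moreover have "{x1, x2} \<in> scaled_E k V E"
      apply (rule scaledE_intro)
      using p1 p2 rv e k by (auto simp: sub_iff x1_def x2_def grid_adj_def algebra_simps)
    then have "(x1, x2) \<in> hrel (scaled_E k V E)" unfolding hrel_def x1_def x2_def by (auto simp: algebra_simps)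
    ultimately have "(q, x2) \<in> (hrel (scaled_E k V E))\<^sup>*" using x(1) by simp
    then show ?thesis using p2 by (intro bexI[of _ x2]) (auto simp: row_seg_def)
  next
    case False
    then have F: "fst r' = fst r - 1" using \<open>fst r' = fst r + 1 \<or> fst r' = fst r - 1\<close> by simp
    define x1 where "x1 = (k*i, y)"
    define x2 where "x2 = (k*i - 1, y)"
    have p1: "parent_px k x1 = r" unfolding x1_def parent_px_def using k xi i_def by simp
    have p2: "parent_px k x2 = r'" unfolding x2_def parent_px_def using div_lemma2[OF k] xi i_def F e(2)
      by (simp add: prod_eq_iff)
    have "(x, x1) \<in> (hrel (scaled_E k V E))\<^sup>*"
      using block_h[OF k Vi xi(1), of "k*i"] xeq k unfolding x1_def by simp
    moreover have "{x1, x2} \<in> scaled_E k V E"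
      apply (rule scaledE_intro)
      using p1 p2 rv e k by (auto simp: sub_iff x1_def x2_def grid_adj_def algebra_simps)
    then have "(x1, x2) \<in> hrel (scaled_E k V E)" unfolding hrel_def x1_def x2_def by (auto simp: algebra_simps)
    ultimately have "(q, x2) \<in> (hrel (scaled_E k V E))\<^sup>*" using x(1) by simp
    then show ?thesis using p2 by (intro bexI[of _ x2]) (auto simp: row_seg_def)
  qed
qed

lemma col_proj2:
  assumes k: "0<k" and B: "board V E" and r: "r \<in> col_seg E (parent_px k q)"
  shows "\<exists>x \<in> col_seg (scaled_E k V E) q. parent_px k x = r"
  using r unfolding col_seg_def mem_Collect_eq
proof (induction rule: rtrancl_induct)
  case base show ?case by (rule bexI[of _ q]) (auto simp: col_seg_def)
next
  case (step r r')
  then obtain x where x: "(q, x) \<in> (vrel (scaled_E k V E))\<^sup>*" "parent_px k x = r"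
    unfolding col_seg_def by auto
  from step(2) have e: "{r,r'} \<in> E" "fst r = fst r'" "r \<noteq> r'" unfolding vrel_def by auto
  from board_edge[OF B e(1)] have rv: "r \<in> V" "r' \<in> V" "grid_adj r r'" by auto
  then have "snd r' = snd r + 1 \<or> snd r' = snd r - 1" using e(2) unfolding grid_adj_def by auto
  define i where "i = snd r"
  define y where "y = fst x"
  have xi: "snd x div k = i" "y div k = fst r" using x(2) unfolding i_def y_def parent_px_def by auto
  have xeq: "x = (y, snd x)" unfolding y_def by simp
  have Vi: "(y div k, i) \<in> V" using rv xi unfolding i_def by simp
  show ?case
  proof (cases "snd r' = snd r + 1")
    case True
    define x1 where "x1 = (y, k*i + (k-1))"
    define x2 where "x2 = (y, k*(i+1))"
    have p1: "parent_px k x1 = r" unfolding x1_def parent_px_def using div_lemma1[OF k] xi i_def by simp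
    have p2: "parent_px k x2 = r'" unfolding x2_def parent_px_def using k xi i_def True e(2)
      by (simp add: prod_eq_iff)
    have "(x, x1) \<in> (vrel (scaled_E k V E))\<^sup>*"
      using block_v[OF k Vi xi(1), of "k*i + (k-1)"] xeq div_lemma1[OF k] unfolding x1_def by metis
    moreover have "{x1, x2} \<in> scaled_E k V E"
      apply (rule scaledE_intro)
      using p1 p2 rv e k by (auto simp: sub_iff x1_def x2_def grid_adj_def algebra_simps)
    then have "(x1, x2) \<in> vrel (scaled_E k V E)" unfolding vrel_def x1_def x2_def by (auto simp: algebra_simps)
    ultimately have "(q, x2) \<in> (vrel (scaled_E k V E))\<^sup>*" using x(1) by simp
    then show ?thesis using p2 by (intro bexI[of _ x2]) (auto simp: col_seg_def)
  next
    case False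
    then have F: "snd r' = snd r - 1" using \<open>snd r' = snd r + 1 \<or> snd r' = snd r - 1\<close> by simp
    define x1 where "x1 = (y, k*i)"
    define x2 where "x2 = (y, k*i - 1)"
    have p1: "parent_px k x1 = r" unfolding x1_def parent_px_def using k xi i_def by simp
    have p2: "parent_px k x2 = r'" unfolding x2_def parent_px_def using div_lemma2[OF k] xi i_def F e(2)
      by (simp add: prod_eq_iff)
    have "(x, x1) \<in> (vrel (scaled_E k V E))\<^sup>*"
      using block_v[OF k Vi xi(1), of "k*i"] xeq k unfolding x1_def by simp
    moreover have "{x1, x2} \<in> scaled_E k V E"
      apply (rule scaledE_intro)
      using p1 p2 rv e k by (auto simp: sub_iff x1_def x2_def grid_adj_def algebra_simps)
    then have "(x1, x2) \<in> vrel (scaled_E k V E)" unfolding vrel_def x1_def x2_def by (auto simp: algebra_simps)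
    ultimately have "(q, x2) \<in> (vrel (scaled_E k V E))\<^sup>*" using x(1) by simp
    then show ?thesis using p2 by (intro bexI[of _ x2]) (auto simp: col_seg_def)
  qed
qed


lemma the_min_proj:
  fixes h h' :: "pixel \<Rightarrow> int" and f :: "pixel \<Rightarrow> pixel"
  assumes fin: "finite R" and ne: "R \<noteq> {}" and inj: "inj_on h R" and inj': "inj_on h' (f ` R)"
    and mono: "\<forall>x\<in>R. \<forall>y\<in>R. h x \<le> h y \<longrightarrow> h' (f x) \<le> h' (f y)"
  shows "(THE q. q \<in> R \<and> (\<forall>q'\<in>R. h q \<le> h q')) \<in> R \<and>
         f (THE q. q \<in> R \<and> (\<forall>q'\<in>R. h q \<le> h q')) = (THE r. r \<in> f ` R \<and> (\<forall>r'\<in>f ` R. h' r \<le> h' r'))"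
proof -
  have "Min (h ` R) \<in> h ` R" using fin ne by simp
  then obtain m where m: "m \<in> R" "h m = Min (h ` R)" by auto
  have mmin: "\<forall>q'\<in>R. h m \<le> h q'" using m fin by simp
  have t1: "(THE q. q \<in> R \<and> (\<forall>q'\<in>R. h q \<le> h q')) = m"
  proof (rule the_equality)
    show "m \<in> R \<and> (\<forall>q'\<in>R. h m \<le> h q')" using m mmin by simp
    fix q assume "q \<in> R \<and> (\<forall>q'\<in>R. h q \<le> h q')"
    then have "q \<in> R" "h q = h m" using mmin m by force+
    then show "q = m" using inj m unfolding inj_on_def by blast
  qed
  have t2: "(THE r. r \<in> f ` R \<and> (\<forall>r'\<in>f ` R. h' r \<le> h' r')) = f m"
  proof (rule the_equality)
    show "f m \<in> f ` R \<and> (\<forall>r'\<in>f ` R. h' (f m) \<le> h' r')" using m mmin mono by auto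
    fix r assume r: "r \<in> f ` R \<and> (\<forall>r'\<in>f ` R. h' r \<le> h' r')"
    then have "h' r \<le> h' (f m)" using m by auto
    moreover from r obtain x where "x \<in> R" "r = f x" by auto
    then have "h' (f m) \<le> h' r" using mono mmin m by auto
    ultimately have "h' r = h' (f m)" by simp
    then show "r = f m" using inj' r m unfolding inj_on_def by blast
  qed
  show ?thesis using t1 t2 m by simp
qed

lemma row_img:
  assumes k: "0<k" and B: "board V E"
  shows "parent_px k ` row_seg (scaled_E k V E) q = row_seg E (parent_px k q)"
  using row_proj1[of _ k V E q] row_proj2[OF k B, of _ q] by blast

lemma col_img:
  assumes k: "0<k" and B: "board V E"
  shows "parent_px k ` col_seg (scaled_E k V E) q = col_seg E (parent_px k q)"
  using col_proj1[of _ k V E q] col_proj2[OF k B, of _ q] by blast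

lemma ends_row:
  assumes k: "0<k" and B: "board V E" and q: "q \<in> subpixels k V"
  shows "left_end (scaled_E k V E) q \<in> row_seg (scaled_E k V E) q \<and>
         parent_px k (left_end (scaled_E k V E) q) = left_end E (parent_px k q)"
    and "right_end (scaled_E k V E) q \<in> row_seg (scaled_E k V E) q \<and>
         parent_px k (right_end (scaled_E k V E) q) = right_end E (parent_px k q)"
proof -
  let ?R = "row_seg (scaled_E k V E) q"
  have img: "parent_px k ` ?R = row_seg E (parent_px k q)" using row_img[OF k B] .
  have "finite V" using B unfolding board_def by simp
  then have fin: "finite ?R"
    using row_sub[OF _ scaledE_sub] q finite_sub[of V k]
    by (metis finite_insert infinite_super insert_absorb subsetI)
  have ne: "?R \<noteq> {}" unfolding row_seg_def by blast
  have injR: "inj_on h ?R" if "h = fst \<or> h = (\<lambda>x. - fst x)" for h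
    using row_snd[of _ "scaled_E k V E" q] that unfolding inj_on_def by (auto simp: prod_eq_iff)
  have injB: "inj_on h (parent_px k ` ?R)" if "h = fst \<or> h = (\<lambda>x. - fst x)" for h
    unfolding img using row_snd[of _ E "parent_px k q"] that unfolding inj_on_def by (auto simp: prod_eq_iff)
  have m1: "\<forall>x\<in>?R. \<forall>y\<in>?R. fst x \<le> fst y \<longrightarrow> fst (parent_px k x) \<le> fst (parent_px k y)"
    using k by (auto simp: parent_px_def zdiv_mono1)
  have m2: "\<forall>x\<in>?R. \<forall>y\<in>?R. - fst x \<le> - fst y \<longrightarrow> - fst (parent_px k x) \<le> - fst (parent_px k y)"
    using k by (auto simp: parent_px_def zdiv_mono1)
  show "left_end (scaled_E k V E) q \<in> ?R \<and>
         parent_px k (left_end (scaled_E k V E) q) = left_end E (parent_px k q)"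
    using the_min_proj[OF fin ne injR injB m1] img unfolding left_end_def by simp
  have re: "right_end F p = (THE x. x \<in> row_seg F p \<and> (\<forall>x'\<in>row_seg F p. - fst x \<le> - fst x'))" for F p
    unfolding right_end_def by simp
  show "right_end (scaled_E k V E) q \<in> ?R \<and>
         parent_px k (right_end (scaled_E k V E) q) = right_end E (parent_px k q)"
    using the_min_proj[OF fin ne injR injB m2] img unfolding re by simp
qed

lemma ends_col:
  assumes k: "0<k" and B: "board V E" and q: "q \<in> subpixels k V"
  shows "up_end (scaled_E k V E) q \<in> col_seg (scaled_E k V E) q \<and>
         parent_px k (up_end (scaled_E k V E) q) = up_end E (parent_px k q)"
    and "down_end (scaled_E k V E) q \<in> col_seg (scaled_E k V E) q \<and>
         parent_px k (down_end (scaled_E k V E) q) = down_end E (parent_px k q)"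
proof -
  let ?R = "col_seg (scaled_E k V E) q"
  have img: "parent_px k ` ?R = col_seg E (parent_px k q)" using col_img[OF k B] .
  have "finite V" using B unfolding board_def by simp
  then have fin: "finite ?R"
    using col_sub[OF _ scaledE_sub] q finite_sub[of V k]
    by (metis finite_insert infinite_super insert_absorb subsetI)
  have ne: "?R \<noteq> {}" unfolding col_seg_def by blast
  have injR: "inj_on h ?R" if "h = snd \<or> h = (\<lambda>x. - snd x)" for h
    using col_fst[of _ "scaled_E k V E" q] that unfolding inj_on_def by (auto simp: prod_eq_iff)
  have injB: "inj_on h (parent_px k ` ?R)" if "h = snd \<or> h = (\<lambda>x. - snd x)" for h
    unfolding img using col_fst[of _ E "parent_px k q"] that unfolding inj_on_def by (auto simp: prod_eq_iff)
  have m1: "\<forall>x\<in>?R. \<forall>y\<in>?R. snd x \<le> snd y \<longrightarrow> snd (parent_px k x) \<le> snd (parent_px k y)"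
    using k by (auto simp: parent_px_def zdiv_mono1)
  have m2: "\<forall>x\<in>?R. \<forall>y\<in>?R. - snd x \<le> - snd y \<longrightarrow> - snd (parent_px k x) \<le> - snd (parent_px k y)"
    using k by (auto simp: parent_px_def zdiv_mono1)
  show "up_end (scaled_E k V E) q \<in> ?R \<and>
         parent_px k (up_end (scaled_E k V E) q) = up_end E (parent_px k q)"
    using the_min_proj[OF fin ne injR injB m1] img unfolding up_end_def by simp
  have re: "down_end F p = (THE x. x \<in> col_seg F p \<and> (\<forall>x'\<in>col_seg F p. - snd x \<le> - snd x'))" for F p
    unfolding down_end_def by simp
  show "down_end (scaled_E k V E) q \<in> ?R \<and>
         parent_px k (down_end (scaled_E k V E) q) = down_end E (parent_px k q)"
    using the_min_proj[OF fin ne injR injB m2] img unfolding re by simp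
qed


lemma tilt_proj:
  assumes k: "0<k" and B: "board V E"
    and e: "(q,q') \<in> full_tilt_edges (scaled_V k V) (scaled_E k V E)"
  shows "q \<in> subpixels k V \<and> q' \<in> subpixels k V \<and>
    (parent_px k q \<noteq> parent_px k q' \<longrightarrow> (parent_px k q, parent_px k q') \<in> full_tilt_edges V E)"
proof -
  have q: "q \<in> subpixels k V" using e unfolding full_tilt_edges_def scaled_V_def by auto
  have q'1: "q' \<in> {left_end (scaled_E k V E) q, right_end (scaled_E k V E) q,
                   up_end (scaled_E k V E) q, down_end (scaled_E k V E) q}"
    using e unfolding full_tilt_edges_def by auto
  note r = ends_row[OF k B q] and c = ends_col[OF k B q]
  have "q' \<in> row_seg (scaled_E k V E) q \<or> q' \<in> col_seg (scaled_E k V E) q"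
    using q'1 r c by auto
  then have q': "q' \<in> subpixels k V"
    using row_sub[OF _ scaledE_sub] col_sub[OF _ scaledE_sub] q by blast
  have pq: "parent_px k q \<in> V" using q k sub_iff by blast
  have "parent_px k q' \<in> {left_end E (parent_px k q), right_end E (parent_px k q),
                   up_end E (parent_px k q), down_end E (parent_px k q)}"
    using q'1 r c by auto
  then show ?thesis using q q' pq unfolding full_tilt_edges_def by auto
qed


lemma ext_src:
  assumes "(x, y) \<in> ext_edges G S"
  shows "\<exists>q. x = Some q \<and> ((y = None \<and> q \<in> S) \<or>
     (\<exists>q'. y = Some q' \<and> ((q,q') \<in> G \<or> ((q',q) \<in> G \<and> (q,q') \<notin> G))))"
  using assms unfolding ext_edges_def by auto

lemma ext_in1: "(p, r) \<in> G \<or> (r, p) \<in> G \<Longrightarrow> (Some p, Some r) \<in> ext_edges G S"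
  unfolding ext_edges_def by blast

lemma ext_in2: "p \<in> S \<Longrightarrow> (Some p, None) \<in> ext_edges G S"
  unfolding ext_edges_def by blast

theorem mainTheorem9:
  fixes V :: "pixel set" and E :: "pixel set set" and S :: "pixel set"
    and k :: int and w :: nat and A :: "(pixel option \<times> pixel option) set"
  assumes "board V E" and "S \<subseteq> V" and "k \<ge> 1"
    and "arborescence_to (ext_vertices (scaled_V k V))
           (ext_edges (full_tilt_edges (scaled_V k V) (scaled_E k V E)) (subpixels k S)) None A"
    and "arb_weight (full_tilt_edges (scaled_V k V) (scaled_E k V E)) A = w"
  shows "\<exists>A'. arborescence_to (ext_vertices V) (ext_edges (full_tilt_edges V E) S) None A'
           \<and> arb_weight (full_tilt_edges V E) A' \<le> w"
proof -
  have k: "0 < k" using assms(3) by simp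
  have B: "board V E" by fact
  have finV: "finite V" using B unfolding board_def by simp
  define Vk where "Vk = subpixels k V"
  define Gk where "Gk = full_tilt_edges (scaled_V k V) (scaled_E k V E)"
  define GB where "GB = full_tilt_edges V E"
  define Sk where "Sk = subpixels k S"
  define \<pi> where "\<pi> = parent_px k"
  have Asub: "A \<subseteq> ext_edges Gk Sk"
    and uniq: "\<forall>v\<in>ext_vertices Vk - {None}. \<exists>!w. (v,w) \<in> A"
    and reach: "\<forall>v\<in>ext_vertices Vk. (v, None) \<in> A\<^sup>*"
    using assms(4) unfolding arborescence_to_def Gk_def Sk_def Vk_def scaled_V_def by auto
  have Gk_sub: "(q,q') \<in> Gk \<Longrightarrow> q \<in> Vk \<and> q' \<in> Vk" for q q'
    using tilt_proj[OF k B] unfolding Gk_def Vk_def by blast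
  have Gk_proj: "(q,q') \<in> Gk \<Longrightarrow> \<pi> q \<noteq> \<pi> q' \<Longrightarrow> (\<pi> q, \<pi> q') \<in> GB" for q q'
    using tilt_proj[OF k B] unfolding Gk_def GB_def \<pi>_def by blast
  have Sk_sub: "Sk \<subseteq> Vk" using assms(2) unfolding Sk_def Vk_def subpixels_def by blast
  have finVk: "finite Vk" using finite_sub[OF finV] unfolding Vk_def .
  have A_sub2: "A \<subseteq> ext_vertices Vk \<times> ext_vertices Vk"
  proof
    fix e assume "e \<in> A"
    then obtain x y where e: "e = (x,y)" "(x,y) \<in> ext_edges Gk Sk" using Asub by (cases e) auto
    from ext_src[OF e(2)] show "e \<in> ext_vertices Vk \<times> ext_vertices Vk"
      using e Gk_sub Sk_sub unfolding ext_vertices_def by auto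
  qed
  have finA: "finite A"
    using A_sub2 finVk unfolding ext_vertices_def by (meson finite_SigmaI finite_Un finite.intros finite_imageI finite_subset)
  define d where "d v = (LEAST n. (v, None) \<in> A ^^ n)" for v
  have dec: "(y, None) \<in> A\<^sup>* \<and> d y < d (Some q)" if q: "q \<in> Vk" and qy: "(Some q, y) \<in> A" for q y
  proof -
    have sv: "Some q \<in> ext_vertices Vk - {None}" using q unfolding ext_vertices_def by auto
    have "(Some q, None) \<in> A\<^sup>*" using reach sv by auto
    then obtain n where "(Some q, None) \<in> A ^^ n" using rtrancl_power by blast
    then have dn: "(Some q, None) \<in> A ^^ d (Some q)" unfolding d_def by (rule LeastI)
    then obtain m where m: "d (Some q) = Suc m"
      by (cases "d (Some q)") auto
    then obtain y' where y': "(Some q, y') \<in> A" "(y', None) \<in> A ^^ m" using dn relpow_Suc_D2 by metis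
    have "y' = y" using uniq sv y'(1) qy by blast
    then have "(y, None) \<in> A ^^ m" using y' by simp
    then have "d y \<le> m" unfolding d_def by (rule Least_le)
    then show ?thesis using m \<open>(y, None) \<in> A ^^ m\<close> relpow_imp_rtrancl by auto
  qed
  have "\<exists>q. (q \<in> Vk \<and> \<pi> q = p) \<and> (\<forall>q'. (q' \<in> Vk \<and> \<pi> q' = p) \<longrightarrow> d (Some q) \<le> d (Some q'))"
    if p: "p \<in> V" for p
  proof (rule ex_has_least_nat[where m="\<lambda>q. d (Some q)"])
    have "\<pi> (k * fst p, k * snd p) = p" unfolding \<pi>_def parent_px_def using k by simp
    then show "(k * fst p, k * snd p) \<in> Vk \<and> \<pi> (k * fst p, k * snd p) = p"
      using p sub_iff[OF k] unfolding Vk_def \<pi>_def by metis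
  qed
  then obtain sel where sel: "\<And>p. p \<in> V \<Longrightarrow> sel p \<in> Vk \<and> \<pi> (sel p) = p \<and>
      (\<forall>q'. (q' \<in> Vk \<and> \<pi> q' = p) \<longrightarrow> d (Some (sel p)) \<le> d (Some q'))"
    by metis
  have "\<exists>y. (Some (sel p), y) \<in> A" if "p \<in> V" for p
    using uniq sel[OF that] unfolding ext_vertices_def by blast
  then obtain nx where nx: "\<And>p. p \<in> V \<Longrightarrow> (Some (sel p), nx p) \<in> A" by metis
  define D where "D p = d (Some (sel p))" for p
  have step: "(nx p = None \<and> p \<in> S) \<or> (\<exists>q'. nx p = Some q' \<and> q' \<in> Vk \<and> \<pi> q' \<in> V \<and> \<pi> q' \<noteq> p \<and>
       D (\<pi> q') < D p \<and> ((sel p, q') \<in> Gk \<or> ((q', sel p) \<in> Gk \<and> (sel p, q') \<notin> Gk)))"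
    if p: "p \<in> V" for p
  proof -
    have e: "(Some (sel p), nx p) \<in> ext_edges Gk Sk" using nx[OF p] Asub by auto
    have sp: "sel p \<in> Vk" "\<pi> (sel p) = p" using sel[OF p] by auto
    show ?thesis
    proof (cases "nx p")
      case None
      then have "sel p \<in> Sk" using ext_src[OF e] by auto
      then have "p \<in> S" using sp sub_iff[OF k] unfolding Sk_def \<pi>_def by metis
      then show ?thesis using None by simp
    next
      case (Some q')
      then have g: "(sel p, q') \<in> Gk \<or> ((q', sel p) \<in> Gk \<and> (sel p, q') \<notin> Gk)"
        using ext_src[OF e] by auto
      then have q': "q' \<in> Vk" using Gk_sub by blast
      have pq: "\<pi> q' \<in> V" using q' sub_iff[OF k] unfolding Vk_def \<pi>_def by metis
      have dd: "d (Some q') < d (Some (sel p))" using dec[OF sp(1)] nx[OF p] Some by auto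
      have ne: "\<pi> q' \<noteq> p" using sel[OF p] q' dd by fastforce
      have "D (\<pi> q') \<le> d (Some q')" using sel[OF pq] q' unfolding D_def by blast
      then have "D (\<pi> q') < D p" using dd unfolding D_def by simp
      then show ?thesis using Some g q' pq ne by blast
    qed
  qed
  define f where "f p = (Some p, map_option \<pi> (nx p))" for p
  define A' where "A' = f ` V"
  have A'sub: "A' \<subseteq> ext_edges GB S"
  proof
    fix e assume "e \<in> A'"
    then obtain p where p: "p \<in> V" "e = f p" unfolding A'_def by auto
    from step[OF p(1)] show "e \<in> ext_edges GB S"
    proof
      assume "nx p = None \<and> p \<in> S"
      then show ?thesis using p ext_in2[of p S GB] unfolding f_def by simp
    next
      assume "\<exists>q'. nx p = Some q' \<and> q' \<in> Vk \<and> \<pi> q' \<in> V \<and> \<pi> q' \<noteq> p \<and>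
       D (\<pi> q') < D p \<and> ((sel p, q') \<in> Gk \<or> ((q', sel p) \<in> Gk \<and> (sel p, q') \<notin> Gk))"
      then obtain q' where q': "nx p = Some q'" "\<pi> q' \<noteq> p"
        "(sel p, q') \<in> Gk \<or> (q', sel p) \<in> Gk" by blast
      have sp: "\<pi> (sel p) = p" using sel[OF p(1)] by auto
      have "(p, \<pi> q') \<in> GB \<or> (\<pi> q', p) \<in> GB" using q'(2,3) Gk_proj sp by metis
      then show ?thesis using p q' ext_in1 unfolding f_def by simp
    qed
  qed
  have uniq': "\<forall>v\<in>ext_vertices V - {None}. \<exists>!w. (v,w) \<in> A'"
    unfolding ext_vertices_def A'_def f_def by auto
  have reachp: "(Some p, None) \<in> A'\<^sup>*" if "p \<in> V" for p
    using that
  proof (induction "D p" arbitrary: p rule: less_induct)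
    case less
    have fa: "f p \<in> A'" using less.prems unfolding A'_def by simp
    from step[OF less.prems] show ?case
    proof
      assume "nx p = None \<and> p \<in> S"
      then have "(Some p, None) \<in> A'" using fa unfolding f_def by simp
      then show ?thesis by simp
    next
      assume "\<exists>q'. nx p = Some q' \<and> q' \<in> Vk \<and> \<pi> q' \<in> V \<and> \<pi> q' \<noteq> p \<and>
       D (\<pi> q') < D p \<and> ((sel p, q') \<in> Gk \<or> ((q', sel p) \<in> Gk \<and> (sel p, q') \<notin> Gk))"
      then obtain q' where q': "nx p = Some q'" "\<pi> q' \<in> V" "D (\<pi> q') < D p" by blast
      have "(Some p, Some (\<pi> q')) \<in> A'" using fa q' unfolding f_def by simp
      moreover have "(Some (\<pi> q'), None) \<in> A'\<^sup>*" using less.hyps q' by blast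
      ultimately show ?thesis by (meson converse_rtrancl_into_rtrancl)
    qed
  qed
  have reach': "\<forall>v\<in>ext_vertices V. (v, None) \<in> A'\<^sup>*"
    using reachp unfolding ext_vertices_def by auto
  have arb: "arborescence_to (ext_vertices V) (ext_edges GB S) None A'"
    unfolding arborescence_to_def using A'sub uniq' reach' by blast
  define g where "g p = (Some (sel p), nx p)" for p
  have injf: "inj_on f V" unfolding inj_on_def f_def by auto
  have injg: "inj_on g V"
  proof (rule inj_onI)
    fix x y assume xy: "x \<in> V" "y \<in> V" "g x = g y"
    then have "sel x = sel y" unfolding g_def by simp
    then have "\<pi> (sel x) = \<pi> (sel y)" by simp
    then show "x = y" using sel[OF xy(1)] sel[OF xy(2)] by simp
  qed
  have gA: "g ` V \<subseteq> A" using nx unfolding g_def by auto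
  have wle: "ext_weight GB (f p) \<le> ext_weight Gk (g p)" if p: "p \<in> V" for p
  proof (cases "nx p")
    case None then show ?thesis unfolding f_def g_def ext_weight_def by simp
  next
    case (Some q')
    show ?thesis
    proof (cases "(sel p, q') \<in> Gk")
      case True
      have ne: "\<pi> q' \<noteq> p" using step[OF p] Some by auto
      have "\<pi> (sel p) = p" using sel[OF p] by auto
      then have "(p, \<pi> q') \<in> GB" using Gk_proj[OF True] ne by metis
      then show ?thesis using Some unfolding f_def g_def ext_weight_def by simp
    next
      case False
      then show ?thesis using Some unfolding f_def g_def ext_weight_def by simp
    qed
  qed
  have "arb_weight GB A' = (\<Sum>p\<in>V. ext_weight GB (f p))"
    unfolding arb_weight_def A'_def using sum.reindex[OF injf] by simp
  also have "\<dots> \<le> (\<Sum>p\<in>V. ext_weight Gk (g p))" using wle by (rule sum_mono)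
  also have "\<dots> = (\<Sum>e\<in>g ` V. ext_weight Gk e)" using sum.reindex[OF injg, of "ext_weight Gk"] by (simp add: comp_def)
  also have "\<dots> \<le> (\<Sum>e\<in>A. ext_weight Gk e)" using gA finA by (intro sum_mono2) auto
  also have "\<dots> = w" using assms(5) unfolding arb_weight_def Gk_def by simp
  finally show ?thesis using arb unfolding GB_def by blast
qed

end
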